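(* Let $G=(V,E,w)$ be an edge-weighted graph with positive rational weights, no isolated vertices and maximum degree $\Delta$. The greedy algorithm applied to $U=V$ and the function $g(A)=h(A)+\frac1L f(A)$ returns a WPPITDS $S$ with $$|S|\le\Big(1+\ln\big(\tfrac32\cdot L\cdot W+\Delta\big)\Big)\cdot|S^*|,$$ where $S^*$ is a minimum-cardinality WPPITDS.
   Context: $N_A(v)=N(v)\cap A$, $W_A(v)=\sum_{u\in N_A(v)}w_{(v,u)}$, $W(v)=W_V(v)$, $W=\max_v W(v)$. $h(A)=\sum_{v\in V}h_A(v)$ with $h_A(v)=W(v)/2$ if $v\in A$ or $W_A(v)\ge W(v)/2$, and $h_A(v)=W_A(v)$ otherwise. $f(A)=\sum_{v\in V}\delta_A(v)$ with $\delta_A(v)=1$ if $|N_A(v)|>0$ and $0$ otherwise. For $v$ with incident edge weights $w_1,\dots,w_d$, write $w_0=W(v)/2$ and each $w_i$ as a reduced fraction $p_i/q_i$; $l(v)=\mathrm{lcm}\{q_0,\dots,q_d\}$, $L=\max_v l(v)$. The greedy algorithm: start with $S=\emptyset$; while some $u\in V\setminus S$ has $g(S\cup\{u\})-g(S)>0$, add to $S$ an element maximizing this increment (ties arbitrary); return $S$. A WPPITDS is a set $S\subseteq V$ such that every $v\in V\setminus S$ satisfies $W_S(v)\ge W(v)/2$ and every vertex of $S$ has at least one neighbor in $S$. *)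

theory Defs
  imports Complex_Main
begin

definition wgraph :: "'a set \<Rightarrow> ('a \<Rightarrow> 'a \<Rightarrow> bool) \<Rightarrow> ('a \<Rightarrow> 'a \<Rightarrow> rat) \<Rightarrow> bool" where
  "wgraph V E w \<longleftrightarrow> finite V
     \<and> (\<forall>u v. E u v \<longrightarrow> u \<in> V \<and> v \<in> V)
     \<and> (\<forall>u v. E u v \<longrightarrow> E v u)
     \<and> (\<forall>v. \<not> E v v)
     \<and> (\<forall>u v. E u v \<longrightarrow> w u v = w v u \<and> w u v > 0)"

definition no_isolated :: "'a set \<Rightarrow> ('a \<Rightarrow> 'a \<Rightarrow> bool) \<Rightarrow> bool" where
  "no_isolated V E \<longleftrightarrow> (\<forall>v\<in>V. \<exists>u. E v u)"

definition nbhd :: "'a set \<Rightarrow> ('a \<Rightarrow> 'a \<Rightarrow> bool) \<Rightarrow> 'a \<Rightarrow> 'a set" where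
  "nbhd V E v = {u \<in> V. E v u}"

definition nbhdA :: "'a set \<Rightarrow> ('a \<Rightarrow> 'a \<Rightarrow> bool) \<Rightarrow> 'a set \<Rightarrow> 'a \<Rightarrow> 'a set" where
  "nbhdA V E A v = nbhd V E v \<inter> A"

definition WA :: "'a set \<Rightarrow> ('a \<Rightarrow> 'a \<Rightarrow> bool) \<Rightarrow> ('a \<Rightarrow> 'a \<Rightarrow> rat) \<Rightarrow> 'a set \<Rightarrow> 'a \<Rightarrow> rat" where
  "WA V E w A v = (\<Sum>u\<in>nbhdA V E A v. w v u)"

definition Wv :: "'a set \<Rightarrow> ('a \<Rightarrow> 'a \<Rightarrow> bool) \<Rightarrow> ('a \<Rightarrow> 'a \<Rightarrow> rat) \<Rightarrow> 'a \<Rightarrow> rat" where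
  "Wv V E w v = WA V E w V v"

definition Wmax :: "'a set \<Rightarrow> ('a \<Rightarrow> 'a \<Rightarrow> bool) \<Rightarrow> ('a \<Rightarrow> 'a \<Rightarrow> rat) \<Rightarrow> rat" where
  "Wmax V E w = Max (Wv V E w ` V)"

definition maxdeg :: "'a set \<Rightarrow> ('a \<Rightarrow> 'a \<Rightarrow> bool) \<Rightarrow> nat" where
  "maxdeg V E = Max ((\<lambda>v. card (nbhd V E v)) ` V)"

definition denom :: "rat \<Rightarrow> int" where
  "denom q = snd (quotient_of q)"

definition lv :: "'a set \<Rightarrow> ('a \<Rightarrow> 'a \<Rightarrow> bool) \<Rightarrow> ('a \<Rightarrow> 'a \<Rightarrow> rat) \<Rightarrow> 'a \<Rightarrow> int" where
  "lv V E w v = Lcm (denom ` ({Wv V E w v / 2} \<union> (\<lambda>u. w v u) ` nbhd V E v))"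

definition Lmax :: "'a set \<Rightarrow> ('a \<Rightarrow> 'a \<Rightarrow> bool) \<Rightarrow> ('a \<Rightarrow> 'a \<Rightarrow> rat) \<Rightarrow> int" where
  "Lmax V E w = Max (lv V E w ` V)"

definition hA :: "'a set \<Rightarrow> ('a \<Rightarrow> 'a \<Rightarrow> bool) \<Rightarrow> ('a \<Rightarrow> 'a \<Rightarrow> rat) \<Rightarrow> 'a set \<Rightarrow> 'a \<Rightarrow> rat" where
  "hA V E w A v = (if v \<in> A \<or> WA V E w A v \<ge> Wv V E w v / 2 then Wv V E w v / 2 else WA V E w A v)"

definition hfun :: "'a set \<Rightarrow> ('a \<Rightarrow> 'a \<Rightarrow> bool) \<Rightarrow> ('a \<Rightarrow> 'a \<Rightarrow> rat) \<Rightarrow> 'a set \<Rightarrow> rat" where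
  "hfun V E w A = (\<Sum>v\<in>V. hA V E w A v)"

definition deltaA :: "'a set \<Rightarrow> ('a \<Rightarrow> 'a \<Rightarrow> bool) \<Rightarrow> 'a set \<Rightarrow> 'a \<Rightarrow> nat" where
  "deltaA V E A v = (if card (nbhdA V E A v) > 0 then 1 else 0)"

definition ffun :: "'a set \<Rightarrow> ('a \<Rightarrow> 'a \<Rightarrow> bool) \<Rightarrow> 'a set \<Rightarrow> nat" where
  "ffun V E A = (\<Sum>v\<in>V. deltaA V E A v)"

definition gfun :: "'a set \<Rightarrow> ('a \<Rightarrow> 'a \<Rightarrow> bool) \<Rightarrow> ('a \<Rightarrow> 'a \<Rightarrow> rat) \<Rightarrow> 'a set \<Rightarrow> rat" where
  "gfun V E w A = hfun V E w A + of_nat (ffun V E A) / of_int (Lmax V E w)"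

definition greedy_step :: "('a set \<Rightarrow> rat) \<Rightarrow> 'a set \<Rightarrow> 'a set \<Rightarrow> 'a set \<Rightarrow> bool" where
  "greedy_step g U S S' \<longleftrightarrow> (\<exists>u\<in>U - S. g (S \<union> {u}) - g S > 0
      \<and> (\<forall>u'\<in>U - S. g (S \<union> {u'}) - g S \<le> g (S \<union> {u}) - g S)
      \<and> S' = S \<union> {u})"

text \<open>S is a possible output of the greedy algorithm (for some tie-breaking).\<close>
definition greedy_output :: "('a set \<Rightarrow> rat) \<Rightarrow> 'a set \<Rightarrow> 'a set \<Rightarrow> bool" where
  "greedy_output g U S \<longleftrightarrow> (greedy_step g U)\<^sup>*\<^sup>* {} S
      \<and> \<not> (\<exists>u\<in>U - S. g (S \<union> {u}) - g S > 0)"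

definition WPPITDS :: "'a set \<Rightarrow> ('a \<Rightarrow> 'a \<Rightarrow> bool) \<Rightarrow> ('a \<Rightarrow> 'a \<Rightarrow> rat) \<Rightarrow> 'a set \<Rightarrow> bool" where
  "WPPITDS V E w S \<longleftrightarrow> S \<subseteq> V
     \<and> (\<forall>v\<in>V - S. WA V E w S v \<ge> Wv V E w v / 2)
     \<and> (\<forall>v\<in>S. card (nbhdA V E S v) > 0)"

end

theory Submission
  imports Defs
begin


definition Phi :: "real \<Rightarrow> real \<Rightarrow> real \<Rightarrow> real" where
  "Phi k L r = (if r \<le> k/L then L*r else k + k * ln (r*L/k))"
definition phi :: "real \<Rightarrow> real \<Rightarrow> real \<Rightarrow> real" where
  "phi k L a = (if a \<le> k/L then L else k/a)"

lemma Phi_concave: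
  fixes k L a b :: real
  assumes k: "k>0" and L: "L>0" and b0: "0\<le>b" and ba: "b\<le>a"
  shows "Phi k L b + phi k L a * (a-b) \<le> Phi k L a"
proof (cases "a \<le> k/L")
  case True
  then have "b \<le> k/L" using ba by linarith
  then show ?thesis using True by (simp add: Phi_def phi_def algebra_simps)
next
  case False
  have kL: "k/L > 0" using k L by simp
  have a0: "a > 0" using False kL by linarith
  have aLk: "a*L > k" using False L by (simp add: field_simps)
  have x1: "a*L/k > 1" using aLk k by simp
  show ?thesis
  proof (cases "b \<le> k/L")
    case True
    have lnx: "ln (k/(a*L)) \<le> k/(a*L) - 1" by (rule ln_le_minus_one) (use k a0 L in simp)
    have "ln (k/(a*L)) = - ln (a*L/k)" using k a0 L by (simp add: ln_div)
    then have l1: "ln (a*L/k) \<ge> 1 - k/(a*L)" using lnx by linarith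
    have "k/a < L" using aLk a0 by (simp add: field_simps)
    then have "b*(L - k/a) \<le> (k/L)*(L - k/a)" using True by (intro mult_right_mono) auto
    also have "(k/L)*(L - k/a) = k*(1 - k/(a*L))" using L a0 by (simp add: field_simps)
    also have "\<dots> \<le> k * ln (a*L/k)" using l1 k by (intro mult_left_mono) auto
    finally have m: "b*(L - k/a) \<le> k * ln (a*L/k)" .
    have "L*b + k/a*(a-b) = k + b*(L - k/a)" using a0 by (simp add: field_simps)
    then show ?thesis using True False m by (simp add: Phi_def phi_def)
  next
    case bF: False
    have b0': "b > 0" using bF kL by linarith
    have "b*L/k = (a*L/k)*(b/a)" using a0 by (simp add: field_simps)
    moreover have "ln ((a*L/k)*(b/a)) = ln (a*L/k) + ln (b/a)" using a0 b0' k L by (intro ln_mult_pos) auto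
    ultimately have e: "ln (b*L/k) = ln (a*L/k) + ln (b/a)" by simp
    have lb: "ln (b/a) \<le> b/a - 1" by (rule ln_le_minus_one) (use a0 b0' in simp)
    have "k * ln (b/a) \<le> k*(b/a - 1)" using lb k by (intro mult_left_mono) auto
    moreover have "k/a*(a-b) = k - k*(b/a)" using a0 by (simp add: field_simps)
    ultimately show ?thesis using False bF e by (simp add: Phi_def phi_def algebra_simps)
  qed
qed

lemma Phi_nonneg:
  fixes k L r :: real
  assumes "k>0" "L>0" "r\<ge>0"
  shows "Phi k L r \<ge> 0"
proof (cases "r \<le> k/L")
  case True then show ?thesis using assms by (simp add: Phi_def)
next
  case False
  then have "r*L > k" using assms by (simp add: field_simps)
  then have "r*L/k > 1" using assms by simp
  then have "ln (r*L/k) > 0" by simp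
  then show ?thesis using False assms by (simp add: Phi_def)
qed

lemma Phi_step:
  fixes k L a t :: real
  assumes k: "k>0" and L: "L>0" and t1: "t \<ge> 1/L" and t2: "a \<le> k*t" and b0: "a - t \<ge> 0"
  shows "Phi k L (a - t) + 1 \<le> Phi k L a"
proof -
  have t0: "t > 0" using t1 L by (metis less_le_trans zero_less_divide_1_iff)
  have "phi k L a * t \<ge> 1"
  proof (cases "a \<le> k/L")
    case True then show ?thesis using t1 L by (simp add: phi_def field_simps)
  next
    case False
    then have a0: "a > 0" using k L by (smt (verit) divide_pos_pos)
    have "k/a * t \<ge> 1" using t2 a0 by (simp add: field_simps)
    then show ?thesis using False by (simp add: phi_def)
  qed
  moreover have "Phi k L (a-t) + phi k L a * (a - (a-t)) \<le> Phi k L a"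
    using Phi_concave[OF k L b0, of a] t0 by simp
  ultimately show ?thesis by simp
qed

lemma Phi_final:
  fixes k L r D X :: real
  assumes k: "k>0" and L: "L>0" and r: "r \<le> k*D" and X: "L*D \<le> X" "X \<ge> 1"
  shows "Phi k L r \<le> k * (1 + ln X)"
proof (cases "r \<le> k/L")
  case True
  then have "L*r \<le> k" using L by (simp add: field_simps)
  moreover have "ln X \<ge> 0" using X by simp
  moreover have "k * ln X \<ge> 0" using \<open>ln X \<ge> 0\<close> k by simp
  moreover have "Phi k L r = L*r" using True by (simp add: Phi_def)
  ultimately show ?thesis by (simp add: algebra_simps)
next
  case False
  then have "r*L > k" using k L by (simp add: field_simps)
  then have p: "r*L/k > 0" using k by simp
  have "r*L/k \<le> L*D" using r k L by (simp add: field_simps)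
  then have "r*L/k \<le> X" using X by linarith
  then have "ln (r*L/k) \<le> ln X" using p by simp
  then show ?thesis using False k by (simp add: Phi_def algebra_simps)
qed

lemma sum_cover:
  fixes g :: "'a set \<Rightarrow> rat"
  assumes submod: "\<And>X Y u. Y \<subseteq> X \<Longrightarrow> X \<subseteq> U \<Longrightarrow> u \<in> U \<Longrightarrow> g (insert u X) - g X \<le> g (insert u Y) - g Y"
    and fin: "finite B" and AU: "A \<subseteq> U" and BU: "B \<subseteq> U"
  shows "g (A \<union> B) - g A \<le> (\<Sum>x\<in>B. g (insert x A) - g A)"
  using fin BU
proof (induction B rule: finite_induct)
  case empty then show ?case by simp
next
  case (insert x F)
  have "g (insert x (A \<union> F)) - g (A \<union> F) \<le> g (insert x A) - g A"
    using submod[of A "A \<union> F" x] insert AU by auto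
  moreover have "g (A \<union> insert x F) = g (insert x (A \<union> F))" by (metis Un_insert_right)
  moreover have "(\<Sum>y\<in>insert x F. g (insert y A) - g A) = (g (insert x A) - g A) + (\<Sum>y\<in>F. g (insert y A) - g A)"
    using insert by simp
  moreover have "g (A\<union>F) - g A \<le> (\<Sum>y\<in>F. g (insert y A) - g A)" using insert by auto
  ultimately show ?case by linarith
qed

lemma greedy_inv:
  fixes g :: "'a set \<Rightarrow> rat" and L k :: real
  assumes finU: "finite U" and SoptU: "Sopt \<subseteq> U" and kdef: "k = real (card Sopt)"
    and kpos: "k > 0" and Lpos: "L > 0"
    and mono: "\<And>X Y. Y \<subseteq> X \<Longrightarrow> X \<subseteq> U \<Longrightarrow> g Y \<le> g X"
    and submod: "\<And>X Y u. Y \<subseteq> X \<Longrightarrow> X \<subseteq> U \<Longrightarrow> u \<in> U \<Longrightarrow> g (insert u X) - g X \<le> g (insert u Y) - g Y"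
    and opt: "g Sopt = g U"
    and disc: "\<And>X u. X \<subseteq> U \<Longrightarrow> u \<in> U \<Longrightarrow> g (insert u X) - g X > 0 \<Longrightarrow> 1/L \<le> real_of_rat (g (insert u X) - g X)"
    and reach: "(greedy_step g U)\<^sup>*\<^sup>* {} S"
  shows "S \<subseteq> U \<and> real (card S) \<le> Phi k L (real_of_rat (g U - g {})) - Phi k L (real_of_rat (g U - g S))"
  using reach
proof (induction rule: rtranclp_induct)
  case base then show ?case by simp
next
  case (step S S')
  from step.hyps(2) obtain u where u: "u \<in> U - S" and gp: "g (S \<union> {u}) - g S > 0"
    and gmax: "\<forall>u'\<in>U - S. g (S \<union> {u'}) - g S \<le> g (S \<union> {u}) - g S" and S': "S' = S \<union> {u}"
    unfolding greedy_step_def by blast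
  have SU: "S \<subseteq> U" using step.IH by blast
  define th where "th = g (insert u S) - g S"
  have thp: "th > 0" using gp by (simp add: th_def)
  have each: "g (insert x S) - g S \<le> th" if "x \<in> Sopt" for x
  proof (cases "x \<in> S")
    case True then show ?thesis using thp by (simp add: insert_absorb)
  next
    case False then show ?thesis using gmax that SoptU by (auto simp: th_def)
  qed
  have finSopt: "finite Sopt" using SoptU finU finite_subset by blast
  have "g (S \<union> Sopt) - g S \<le> (\<Sum>x\<in>Sopt. g (insert x S) - g S)"
    by (rule sum_cover[OF submod finSopt SU SoptU]) auto
  also have "\<dots> \<le> of_nat (card Sopt) * th" by (rule sum_bounded_above) (use each in auto)
  finally have c1: "g (S \<union> Sopt) - g S \<le> of_nat (card Sopt) * th" .
  have "g (S \<union> Sopt) = g U"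
    using mono[of Sopt "S \<union> Sopt"] mono[of "S \<union> Sopt" U] SU SoptU opt by auto
  then have c2: "g U - g S \<le> of_nat (card Sopt) * th" using c1 by simp
  have r2: "real_of_rat (g U - g S) \<le> k * real_of_rat th"
    using c2 unfolding kdef by (metis of_rat_less_eq of_rat_mult of_rat_of_nat_eq)
  have uU: "u \<in> U" using u by auto
  have r1: "1/L \<le> real_of_rat th" using disc[OF SU uU] thp by (simp add: th_def)
  have S'U: "insert u S \<subseteq> U" using SU uU by auto
  have "g (insert u S) \<le> g U" using mono[OF S'U] by simp
  then have r3: "real_of_rat (g U - g S) - real_of_rat th \<ge> 0"
    by (simp add: th_def of_rat_diff[symmetric])
  have e: "real_of_rat (g U - g S') = real_of_rat (g U - g S) - real_of_rat th"
    by (simp add: S' th_def of_rat_diff)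
  have "Phi k L (real_of_rat (g U - g S')) + 1 \<le> Phi k L (real_of_rat (g U - g S))"
    unfolding e by (rule Phi_step[OF kpos Lpos r1 r2 r3])
  moreover have "card S' = card S + 1"
    using S' u finite_subset[OF SU finU] by auto
  ultimately show ?case using step.IH S'U S' by auto
qed



locale wg =
  fixes V :: "'a set" and E :: "'a \<Rightarrow> 'a \<Rightarrow> bool" and w :: "'a \<Rightarrow> 'a \<Rightarrow> rat"
  assumes G: "wgraph V E w"
begin

lemma finV: "finite V" using G by (simp add: wgraph_def)
lemma nbhd_sub: "nbhd V E v \<subseteq> V" by (auto simp: nbhd_def)
lemma fin_nbhd: "finite (nbhd V E v)" using finite_subset[OF nbhd_sub finV] .
lemma Esym: "E u v \<Longrightarrow> E v u" using G by (simp add: wgraph_def)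
lemma Eirr: "\<not> E v v" using G by (simp add: wgraph_def)
lemma EV: "E u v \<Longrightarrow> u \<in> V \<and> v \<in> V" using G by (simp add: wgraph_def)
lemma wsym: "E u v \<Longrightarrow> w u v = w v u" using G by (simp add: wgraph_def)
lemma wpos: "E u v \<Longrightarrow> w u v > 0" using G by (simp add: wgraph_def)
lemma wpos': "u \<in> nbhd V E v \<Longrightarrow> w v u > 0" by (auto simp: nbhd_def wpos)

lemma WA_nonneg: "WA V E w X v \<ge> 0"
  unfolding WA_def nbhdA_def by (rule sum_nonneg) (auto intro: less_imp_le wpos')

lemma Wv_nonneg: "Wv V E w v \<ge> 0" unfolding Wv_def by (rule WA_nonneg)

lemma WA_mono: "Y \<subseteq> X \<Longrightarrow> WA V E w Y v \<le> WA V E w X v"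
  unfolding WA_def nbhdA_def
  by (rule sum_mono2) (auto intro: less_imp_le wpos' simp: fin_nbhd)

lemma WA_insert: "WA V E w (insert u X) v = WA V E w X v + (if u \<in> nbhd V E v \<and> u \<notin> X then w v u else 0)"
proof (cases "u \<in> nbhd V E v \<and> u \<notin> X")
  case True
  then have "nbhd V E v \<inter> insert u X = insert u (nbhd V E v \<inter> X)" by auto
  then show ?thesis using True fin_nbhd unfolding WA_def nbhdA_def by simp
next
  case False
  then have "nbhd V E v \<inter> insert u X = nbhd V E v \<inter> X" by auto
  then show ?thesis using False unfolding WA_def nbhdA_def by auto
qed

lemma WA_empty: "WA V E w {} v = 0" by (simp add: WA_def nbhdA_def)

lemma hA_min: "hA V E w X v = min (Wv V E w v / 2) (WA V E w X v + (if v \<in> X then Wv V E w v / 2 else 0))"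
  using WA_nonneg[of X v] by (auto simp: hA_def min_def)

lemma hA_nonneg: "hA V E w X v \<ge> 0"
  using WA_nonneg[of X v] Wv_nonneg[of v] by (simp add: hA_min)

lemma hA_le: "hA V E w X v \<le> Wv V E w v / 2"
  by (simp add: hA_def)

definition mm where "mm X v = WA V E w X v + (if v \<in> X then Wv V E w v / 2 else 0)"

lemma mm_mono: "Y \<subseteq> X \<Longrightarrow> mm Y v \<le> mm X v"
  using WA_mono[of Y X v] Wv_nonneg[of v] by (auto simp: mm_def)

lemma mm_insert: "u \<notin> X \<Longrightarrow> mm (insert u X) v = mm X v + ((if u \<in> nbhd V E v then w v u else 0) + (if u = v then Wv V E w v / 2 else 0))"
  by (auto simp: mm_def WA_insert)

lemma hA_mono: "Y \<subseteq> X \<Longrightarrow> hA V E w Y v \<le> hA V E w X v"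
  using mm_mono[of Y X v] unfolding hA_min mm_def[symmetric] by linarith

lemma min_sub: "(x::rat) \<le> y \<Longrightarrow> a \<ge> 0 \<Longrightarrow> min C (y + a) - min C y \<le> min C (x + a) - min C x"
  by (auto simp: min_def)

lemma hA_submod: "Y \<subseteq> X \<Longrightarrow> hA V E w (insert u X) v - hA V E w X v \<le> hA V E w (insert u Y) v - hA V E w Y v"
proof (cases "u \<in> X")
  case True
  assume "Y \<subseteq> X"
  then show ?thesis using True hA_mono[of Y "insert u Y" v] by (auto simp add: insert_absorb)
next
  case False
  assume YX: "Y \<subseteq> X"
  then have uY: "u \<notin> Y" using False by auto
  define a where "a = (if u \<in> nbhd V E v then w v u else 0) + (if u = v then Wv V E w v / 2 else 0)"
  have a0: "a \<ge> 0" unfolding a_def using wpos'[of u v] Wv_nonneg[of v] by auto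
  show ?thesis unfolding hA_min mm_def[symmetric] mm_insert[OF False] mm_insert[OF uY] a_def[symmetric]
    by (rule min_sub[OF mm_mono[OF YX] a0])
qed

lemma deltaA_eq: "deltaA V E X v = (if nbhd V E v \<inter> X = {} then 0 else 1)"
  using fin_nbhd[of v] by (auto simp: deltaA_def nbhdA_def card_gt_0_iff)

lemma delta_mono: "Y \<subseteq> X \<Longrightarrow> deltaA V E Y v \<le> deltaA V E X v"
  by (auto simp: deltaA_eq)

lemma delta_le1: "deltaA V E X v \<le> 1"
  by (auto simp: deltaA_eq)

lemma delta_submod: "Y \<subseteq> X \<Longrightarrow> real_of_nat (deltaA V E (insert u X) v) - deltaA V E X v \<le> real_of_nat (deltaA V E (insert u Y) v) - deltaA V E Y v"
  by (auto simp: deltaA_eq)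

lemma delta_submod_rat: "Y \<subseteq> X \<Longrightarrow> rat_of_nat (deltaA V E (insert u X) v) - of_nat (deltaA V E X v) \<le> of_nat (deltaA V E (insert u Y) v) - of_nat (deltaA V E Y v)"
  by (auto simp: deltaA_eq)

definition gc where "gc X v = hA V E w X v + of_nat (deltaA V E X v) / of_int (Lmax V E w)"

lemma gfun_sum: "gfun V E w X = (\<Sum>v\<in>V. gc X v)"
  by (simp add: gfun_def gc_def hfun_def ffun_def sum.distrib sum_divide_distrib)

lemma lv_fin: "finite (denom ` ({Wv V E w v / 2} \<union> (\<lambda>u. w v u) ` nbhd V E v))"
  using fin_nbhd by simp

lemma denom_pos: "denom q > 0" by (simp add: denom_def quotient_of_denom_pos')

lemma lv_pos: "lv V E w v > 0"
proof -
  have "lv V E w v \<noteq> 0" unfolding lv_def using Lcm_0_iff[OF lv_fin[of v]] denom_pos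
    by (metis (no_types, lifting) image_iff less_irrefl)
  moreover have "lv V E w v \<ge> 0" unfolding lv_def by simp
  ultimately show ?thesis by simp
qed

lemma Lmax_ge: "v \<in> V \<Longrightarrow> lv V E w v \<le> Lmax V E w"
  unfolding Lmax_def using finV by (intro Max_ge) auto

lemma Lmax_pos: "V \<noteq> {} \<Longrightarrow> Lmax V E w > 0"
  using Lmax_ge lv_pos by (meson all_not_in_conv less_le_trans)

lemma denom_dvd_Ints: "denom q dvd l \<Longrightarrow> rat_of_int l * q \<in> \<int>"
proof -
  assume d: "denom q dvd l"
  obtain a b where qo: "quotient_of q = (a, b)" by (cases "quotient_of q")
  have q: "q = of_int a / of_int b" by (rule quotient_of_div[OF qo])
  have b: "b > 0" by (rule quotient_of_denom_pos[OF qo])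
  have "denom q = b" using qo by (simp add: denom_def)
  then obtain m where l: "l = b * m" using d by (auto elim: dvdE)
  have "rat_of_int l * q = of_int (m * a)" using b by (simp add: q l field_simps)
  then show ?thesis by simp
qed

lemma lv_h_Ints: "rat_of_int (lv V E w v) * hA V E w X v \<in> \<int>"
proof -
  have d1: "denom (Wv V E w v / 2) dvd lv V E w v" unfolding lv_def by (rule dvd_Lcm) simp
  have d2: "denom (w v u) dvd lv V E w v" if "u \<in> nbhd V E v" for u
    unfolding lv_def by (rule dvd_Lcm) (use that in simp)
  have "rat_of_int (lv V E w v) * WA V E w X v \<in> \<int>"
    unfolding WA_def nbhdA_def sum_distrib_left
    by (rule Ints_sum) (use d2 denom_dvd_Ints in auto)
  moreover have "rat_of_int (lv V E w v) * (Wv V E w v / 2) \<in> \<int>" by (rule denom_dvd_Ints[OF d1])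
  ultimately show ?thesis by (simp add: hA_def)
qed

lemma Ints_pos_ge1: "(x::rat) \<in> \<int> \<Longrightarrow> x > 0 \<Longrightarrow> x \<ge> 1"
  by (metis Ints_cases of_int_0_less_iff of_int_1_le_iff zero_less_imp_eq_int int_one_le_iff_zero_less)

lemma hA_disc:
  assumes "hA V E w (insert u X) v - hA V E w X v > 0"
  shows "hA V E w (insert u X) v - hA V E w X v \<ge> 1 / of_int (lv V E w v)"
proof -
  let ?l = "rat_of_int (lv V E w v)"
  have lp: "?l > 0" using lv_pos by simp
  have "?l * (hA V E w (insert u X) v - hA V E w X v) \<in> \<int>"
    using lv_h_Ints[of v "insert u X"] lv_h_Ints[of v X] by (simp add: right_diff_distrib Ints_diff)
  moreover have "?l * (hA V E w (insert u X) v - hA V E w X v) > 0" using assms lp by simp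
  ultimately have "?l * (hA V E w (insert u X) v - hA V E w X v) \<ge> 1" by (rule Ints_pos_ge1)
  then show ?thesis using lp by (simp add: field_simps)
qed

context
  assumes Vne: "V \<noteq> {}"
begin

lemma Lq_pos: "rat_of_int (Lmax V E w) > 0" using Lmax_pos[OF Vne] by simp

lemma gc_mono: "Y \<subseteq> X \<Longrightarrow> gc Y v \<le> gc X v"
  unfolding gc_def using hA_mono[of Y X v] delta_mono[of Y X v] Lq_pos
  by (intro add_mono divide_right_mono) auto

lemma gc_submod: "Y \<subseteq> X \<Longrightarrow> gc (insert u X) v - gc X v \<le> gc (insert u Y) v - gc Y v"
proof -
  assume YX: "Y \<subseteq> X"
  have "(rat_of_nat (deltaA V E (insert u X) v) - of_nat (deltaA V E X v)) / rat_of_int (Lmax V E w)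
     \<le> (rat_of_nat (deltaA V E (insert u Y) v) - of_nat (deltaA V E Y v)) / rat_of_int (Lmax V E w)"
    using delta_submod_rat[OF YX, of u v] Lq_pos by (intro divide_right_mono) auto
  then show ?thesis using hA_submod[OF YX, of u v] unfolding gc_def by (simp add: diff_divide_distrib)
qed

lemma gfun_mono: "Y \<subseteq> X \<Longrightarrow> gfun V E w Y \<le> gfun V E w X"
  unfolding gfun_sum by (rule sum_mono) (rule gc_mono)

lemma gfun_submod: "Y \<subseteq> X \<Longrightarrow> gfun V E w (insert u X) - gfun V E w X \<le> gfun V E w (insert u Y) - gfun V E w Y"
  unfolding gfun_sum sum_subtractf[symmetric] by (rule sum_mono) (rule gc_submod)

lemma gc_disc:
  assumes v: "v \<in> V" and p: "gc (insert u X) v - gc X v > 0"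
  shows "gc (insert u X) v - gc X v \<ge> 1 / rat_of_int (Lmax V E w)"
proof -
  let ?L = "rat_of_int (Lmax V E w)"
  have Lp: "?L > 0" by (rule Lq_pos)
  have hm: "hA V E w (insert u X) v - hA V E w X v \<ge> 0" using hA_mono[of X "insert u X" v] by auto
  have dm: "deltaA V E X v \<le> deltaA V E (insert u X) v" using delta_mono[of X "insert u X" v] by auto
  show ?thesis
  proof (cases "deltaA V E X v < deltaA V E (insert u X) v")
    case True
    then have "deltaA V E X v = 0" "deltaA V E (insert u X) v = 1" using delta_le1[of "insert u X" v] by auto
    then show ?thesis using hm unfolding gc_def by (simp add: field_simps)
  next
    case False
    then have eq: "deltaA V E X v = deltaA V E (insert u X) v" using dm by auto
    then have hp: "hA V E w (insert u X) v - hA V E w X v > 0" using p unfolding gc_def by simp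
    have "1 / ?L \<le> 1 / rat_of_int (lv V E w v)"
      using Lmax_ge[OF v] lv_pos[of v] by (intro divide_left_mono) auto
    also have "\<dots> \<le> hA V E w (insert u X) v - hA V E w X v" by (rule hA_disc[OF hp])
    finally show ?thesis using eq unfolding gc_def by simp
  qed
qed

lemma gfun_disc:
  assumes p: "gfun V E w (insert u X) - gfun V E w X > 0"
  shows "gfun V E w (insert u X) - gfun V E w X \<ge> 1 / rat_of_int (Lmax V E w)"
proof -
  have s: "gfun V E w (insert u X) - gfun V E w X = (\<Sum>v\<in>V. gc (insert u X) v - gc X v)"
    unfolding gfun_sum sum_subtractf ..
  have nn: "\<And>v. gc (insert u X) v - gc X v \<ge> 0" using gc_mono[of X "insert u X"] by auto
  obtain v where v: "v \<in> V" "gc (insert u X) v - gc X v > 0"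
  proof (rule ccontr)
    assume "\<not> thesis"
    then have "\<forall>v\<in>V. gc (insert u X) v - gc X v \<le> 0" using that by force
    then have "(\<Sum>v\<in>V. gc (insert u X) v - gc X v) \<le> 0" by (simp add: sum_nonpos)
    then show False using p s by simp
  qed
  have "gc (insert u X) v - gc X v \<le> (\<Sum>v\<in>V. gc (insert u X) v - gc X v)"
    by (rule member_le_sum[OF v(1)]) (use nn finV in auto)
  then show ?thesis using gc_disc[OF v] s by simp
qed

end

context
  assumes Vne: "V \<noteq> {}" and ni: "no_isolated V E"
begin

lemma nb_ne: "v \<in> V \<Longrightarrow> nbhd V E v \<noteq> {}"
  using ni EV unfolding no_isolated_def nbhd_def by blast

lemma Wv_alt: "Wv V E w v = (\<Sum>u\<in>nbhd V E v. w v u)"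
  unfolding Wv_def WA_def nbhdA_def using nbhd_sub[of v] by (simp add: Int_absorb2)

lemma Wv_pos: "v \<in> V \<Longrightarrow> Wv V E w v > 0"
  unfolding Wv_alt using nb_ne fin_nbhd wpos' by (intro sum_pos) auto

lemma hA_V: "v \<in> V \<Longrightarrow> hA V E w V v = Wv V E w v / 2" by (simp add: hA_def)
lemma delta_V: "v \<in> V \<Longrightarrow> deltaA V E V v = 1"
  using nb_ne nbhd_sub by (simp add: deltaA_eq Int_absorb2)

lemma wppi_opt: "WPPITDS V E w X \<Longrightarrow> gfun V E w X = gfun V E w V"
proof -
  assume W: "WPPITDS V E w X"
  have "gc X v = gc V v" if v: "v \<in> V" for v
  proof -
    have h: "hA V E w X v = Wv V E w v / 2" using W v unfolding WPPITDS_def hA_def by auto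
    have "deltaA V E X v = 1"
    proof (cases "v \<in> X")
      case True then show ?thesis using W by (simp add: WPPITDS_def deltaA_def)
    next
      case False
      then have "WA V E w X v \<ge> Wv V E w v / 2" using W v unfolding WPPITDS_def by auto
      then have "WA V E w X v > 0" using Wv_pos[OF v] by linarith
      then have "nbhdA V E X v \<noteq> {}" unfolding WA_def by auto
      then show ?thesis unfolding deltaA_eq by (simp add: nbhdA_def)
    qed
    then show ?thesis using h hA_V[OF v] delta_V[OF v] by (simp add: gc_def)
  qed
  then show ?thesis unfolding gfun_sum by (rule sum.cong[OF refl])
qed

lemma opt_wppi:
  assumes XV: "X \<subseteq> V" and eq: "gfun V E w X = gfun V E w V"
  shows "WPPITDS V E w X"
proof -
  have le: "gc X v \<le> gc V v" for v using gc_mono[OF Vne XV] .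
  have all: "gc X v = gc V v" if v: "v \<in> V" for v
  proof (rule ccontr)
    assume "gc X v \<noteq> gc V v"
    then have "gc X v < gc V v" using le[of v] by simp
    then have "(\<Sum>v\<in>V. gc X v) < (\<Sum>v\<in>V. gc V v)"
      using v le finV by (intro sum_strict_mono_ex1) auto
    then show False using eq unfolding gfun_sum by simp
  qed
  have comp: "hA V E w X v = Wv V E w v / 2 \<and> deltaA V E X v = 1" if v: "v \<in> V" for v
  proof -
    have L: "rat_of_int (Lmax V E w) > 0" using Lq_pos[OF Vne] .
    have d: "rat_of_nat (deltaA V E X v) / of_int (Lmax V E w) \<le> 1 / of_int (Lmax V E w)"
      using delta_le1[of X v] L by (intro divide_right_mono) auto
    have h: "hA V E w X v \<le> Wv V E w v / 2" by (rule hA_le)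
    have e: "hA V E w X v + of_nat (deltaA V E X v) / of_int (Lmax V E w) = Wv V E w v / 2 + 1 / of_int (Lmax V E w)"
      using all[OF v] hA_V[OF v] delta_V[OF v] by (simp add: gc_def)
    then have "hA V E w X v = Wv V E w v / 2" using d h by linarith
    moreover have "rat_of_nat (deltaA V E X v) / of_int (Lmax V E w) = 1 / of_int (Lmax V E w)"
      using e calculation by simp
    then have "rat_of_nat (deltaA V E X v) = 1" using L by (simp add: field_simps)
    ultimately show ?thesis by simp
  qed
  show ?thesis unfolding WPPITDS_def
  proof (intro conjI ballI)
    show "X \<subseteq> V" by (rule XV)
  next
    fix v assume v: "v \<in> V - X"
    then have "hA V E w X v = Wv V E w v / 2" using comp by auto
    then show "WA V E w X v \<ge> Wv V E w v / 2" using v unfolding hA_def by (auto split: if_splits)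
  next
    fix v assume v: "v \<in> X"
    then have "deltaA V E X v = 1" using comp XV by auto
    then show "card (nbhdA V E X v) > 0" by (simp add: deltaA_def split: if_splits)
  qed
qed

lemma maxdeg_ge: "v \<in> V \<Longrightarrow> card (nbhd V E v) \<le> maxdeg V E"
  unfolding maxdeg_def using finV by (intro Max_ge) auto

lemma maxdeg_pos: "maxdeg V E \<ge> 1"
proof -
  obtain v where v: "v \<in> V" using Vne by auto
  have "card (nbhd V E v) > 0" using nb_ne[OF v] fin_nbhd by (simp add: card_gt_0_iff)
  then show ?thesis using maxdeg_ge[OF v] by linarith
qed

lemma Wmax_ge: "v \<in> V \<Longrightarrow> Wv V E w v \<le> Wmax V E w"
  unfolding Wmax_def using finV by (intro Max_ge) auto

lemma gfun_empty_nonneg: "gfun V E w {} \<ge> 0"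
  unfolding gfun_def hfun_def using hA_nonneg Lq_pos[OF Vne]
  by (intro add_nonneg_nonneg sum_nonneg divide_nonneg_pos) auto

lemma init_bound:
  assumes u: "u \<in> V"
  shows "gfun V E w {u} - gfun V E w {} \<le> 3/2 * Wmax V E w + of_nat (maxdeg V E) / of_int (Lmax V E w)"
proof -
  have hb: "hA V E w {u} v \<le> (if v = u then Wv V E w u / 2 else 0) + (if E v u then w u v else 0)" for v
  proof (cases "v = u")
    case True
    then show ?thesis using Eirr[of u] by (simp add: hA_def)
  next
    case False
    have "hA V E w {u} v \<le> WA V E w {u} v" using False by (simp add: hA_min)
    also have "\<dots> = (if u \<in> nbhd V E v then w v u else 0)" using WA_insert[of u "{}" v] by (simp add: WA_empty)
    also have "\<dots> \<le> (if E v u then w u v else 0)" using EV[of v u] by (auto simp: nbhd_def wsym)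
    finally show ?thesis using False by simp
  qed
  have "hfun V E w {u} \<le> (\<Sum>v\<in>V. (if v = u then Wv V E w u / 2 else 0) + (if E v u then w u v else 0))"
    unfolding hfun_def by (rule sum_mono) (rule hb)
  also have "\<dots> = Wv V E w u / 2 + (\<Sum>v\<in>V. if E v u then w u v else 0)"
    using u finV by (simp add: sum.distrib)
  also have "(\<Sum>v\<in>V. if E v u then w u v else 0) = (\<Sum>v\<in>{v\<in>V. E v u}. w u v)"
    using finV by (simp add: sum.inter_filter)
  also have "{v\<in>V. E v u} = nbhd V E u" by (auto simp: nbhd_def intro: Esym)
  also have "(\<Sum>v\<in>nbhd V E u. w u v) = Wv V E w u" by (simp add: Wv_alt)
  finally have h1: "hfun V E w {u} \<le> 3/2 * Wmax V E w" using Wmax_ge[OF u] by simp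
  have "ffun V E {u} = (\<Sum>v\<in>V. if E v u then 1 else 0)"
    unfolding ffun_def deltaA_eq using u by (intro sum.cong) (auto simp: nbhd_def)
  also have "\<dots> = card {v\<in>V. E v u}" using finV by (simp add: sum.If_cases Int_def)
  also have "{v\<in>V. E v u} = nbhd V E u" by (auto simp: nbhd_def intro: Esym)
  finally have "ffun V E {u} \<le> maxdeg V E" using maxdeg_ge[OF u] by simp
  then have f1: "rat_of_nat (ffun V E {u}) / of_int (Lmax V E w) \<le> of_nat (maxdeg V E) / of_int (Lmax V E w)"
    using Lq_pos[OF Vne] by (intro divide_right_mono) auto
  show ?thesis using h1 f1 gfun_empty_nonneg unfolding gfun_def[of V E w "{u}"] by linarith
qed

end

end



lemma reach_sub: "(greedy_step g U)\<^sup>*\<^sup>* {} S \<Longrightarrow> S \<subseteq> U"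
  by (induction rule: rtranclp_induct) (auto simp: greedy_step_def)

theorem mainTheorem17:
  fixes V :: "'a set" and E :: "'a \<Rightarrow> 'a \<Rightarrow> bool" and w :: "'a \<Rightarrow> 'a \<Rightarrow> rat"
    and S Sopt :: "'a set"
  assumes "wgraph V E w"
    and "no_isolated V E"
    and "greedy_output (gfun V E w) V S"
    and "WPPITDS V E w Sopt"
    and "\<forall>T. WPPITDS V E w T \<longrightarrow> card Sopt \<le> card T"
  shows "WPPITDS V E w S \<and>
    real (card S) \<le> (1 + ln (3/2 * real_of_int (Lmax V E w) * real_of_rat (Wmax V E w)
                              + real (maxdeg V E))) * real (card Sopt)"
proof -
  interpret wg V E w by unfold_locales (rule assms(1))
  have reach: "(greedy_step (gfun V E w) V)\<^sup>*\<^sup>* {} S"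
    and nopos: "\<not> (\<exists>u\<in>V - S. gfun V E w (S \<union> {u}) - gfun V E w S > 0)"
    using assms(3) by (auto simp: greedy_output_def)
  have SV: "S \<subseteq> V" by (rule reach_sub[OF reach])
  have SoptV: "Sopt \<subseteq> V" using assms(4) by (simp add: WPPITDS_def)
  show ?thesis
  proof (cases "V = {}")
    case True
    then have "S = {}" "Sopt = {}" using SV SoptV by auto
    then show ?thesis using True by (simp add: WPPITDS_def)
  next
    case Vne: False
    note ni = assms(2)
    let ?g = "gfun V E w"
    let ?L = "real_of_int (Lmax V E w)"
    define k where "k = real (card Sopt)"
    have finSopt: "finite Sopt" using SoptV finV finite_subset by blast
    have "Sopt \<noteq> {}"
    proof
      assume e: "Sopt = {}"
      obtain v where v: "v \<in> V" using Vne by auto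
      have "WA V E w {} v \<ge> Wv V E w v / 2" using assms(4) v e by (simp add: WPPITDS_def)
      then show False using Wv_pos[OF Vne ni v] by (simp add: WA_empty)
    qed
    then have kpos: "k > 0" unfolding k_def using finSopt by (simp add: card_gt_0_iff)
    have Lpos: "?L > 0" using Lmax_pos[OF Vne] by simp
    have mono: "\<And>X Y. Y \<subseteq> X \<Longrightarrow> X \<subseteq> V \<Longrightarrow> ?g Y \<le> ?g X" using gfun_mono[OF Vne] by blast
    have submod: "\<And>X Y u. Y \<subseteq> X \<Longrightarrow> X \<subseteq> V \<Longrightarrow> u \<in> V \<Longrightarrow> ?g (insert u X) - ?g X \<le> ?g (insert u Y) - ?g Y"
      using gfun_submod[OF Vne] by blast
    have opt: "?g Sopt = ?g V" by (rule wppi_opt[OF Vne ni assms(4)])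
    have disc: "\<And>X u. X \<subseteq> V \<Longrightarrow> u \<in> V \<Longrightarrow> ?g (insert u X) - ?g X > 0 \<Longrightarrow> 1/?L \<le> real_of_rat (?g (insert u X) - ?g X)"
    proof -
      fix X u assume "?g (insert u X) - ?g X > 0"
      then have "1 / rat_of_int (Lmax V E w) \<le> ?g (insert u X) - ?g X" by (rule gfun_disc[OF Vne])
      then have "real_of_rat (1 / rat_of_int (Lmax V E w)) \<le> real_of_rat (?g (insert u X) - ?g X)"
        using of_rat_less_eq by blast
      then show "1/?L \<le> real_of_rat (?g (insert u X) - ?g X)" by (simp add: of_rat_divide)
    qed
    have inv: "real (card S) \<le> Phi k ?L (real_of_rat (?g V - ?g {})) - Phi k ?L (real_of_rat (?g V - ?g S))"
      using greedy_inv[OF finV SoptV k_def kpos Lpos mono submod opt disc reach] by blast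
    have "?g S \<le> ?g V" using mono[OF SV] by simp
    then have "real_of_rat (?g V - ?g S) \<ge> 0" by simp
    then have P0: "Phi k ?L (real_of_rat (?g V - ?g S)) \<ge> 0" by (rule Phi_nonneg[OF kpos Lpos])
    define Dq where "Dq = 3/2 * Wmax V E w + of_nat (maxdeg V E) / rat_of_int (Lmax V E w)"
    define D where "D = real_of_rat Dq"
    define X where "X = 3/2 * ?L * real_of_rat (Wmax V E w) + real (maxdeg V E)"
    have "?g ({} \<union> Sopt) - ?g {} \<le> (\<Sum>x\<in>Sopt. ?g (insert x {}) - ?g {})"
      by (rule sum_cover[OF submod finSopt]) (use SoptV in auto)
    also have "\<dots> \<le> of_nat (card Sopt) * Dq"
      by (rule sum_bounded_above) (use init_bound[OF Vne ni] SoptV in \<open>auto simp: Dq_def\<close>)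
    finally have "?g V - ?g {} \<le> of_nat (card Sopt) * Dq" using opt by simp
    then have r0: "real_of_rat (?g V - ?g {}) \<le> k * D" unfolding k_def D_def
      by (metis of_rat_less_eq of_rat_mult of_rat_of_nat_eq)
    have LD: "?L * D \<le> X" unfolding D_def Dq_def X_def using Lpos
      by (simp add: of_rat_add of_rat_mult of_rat_divide field_simps)
    have "real_of_rat (Wmax V E w) \<ge> 0"
    proof -
      obtain v where v: "v \<in> V" using Vne by auto
      show ?thesis using Wmax_ge[OF Vne ni v] Wv_nonneg[of v] by simp
    qed
    then have "?L * real_of_rat (Wmax V E w) \<ge> 0" using Lpos by simp
    moreover have "real (maxdeg V E) \<ge> 1" using maxdeg_pos[OF Vne ni] by simp
    ultimately have X1: "X \<ge> 1" unfolding X_def by linarith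
    have "Phi k ?L (real_of_rat (?g V - ?g {})) \<le> k * (1 + ln X)"
      by (rule Phi_final[OF kpos Lpos r0 LD X1])
    then have bound: "real (card S) \<le> (1 + ln X) * k" using inv P0 by (simp add: algebra_simps)
    have "?g V - ?g S \<le> (\<Sum>x\<in>V. ?g (insert x S) - ?g S)"
      using sum_cover[OF submod finV SV subset_refl] SV by (simp add: Un_absorb1)
    also have "\<dots> \<le> 0"
    proof (rule sum_nonpos)
      fix x assume x: "x \<in> V"
      show "?g (insert x S) - ?g S \<le> 0"
      proof (cases "x \<in> S")
        case True then show ?thesis by (simp add: insert_absorb)
      next
        case False then have "x \<in> V - S" using x by auto
        then have "\<not> ?g (insert x S) > ?g S" using nopos by auto
        then show ?thesis by simp
      qed
    qed
    finally have "?g S = ?g V" using mono[OF SV] by simp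
    then have "WPPITDS V E w S" by (rule opt_wppi[OF Vne ni SV])
    then show ?thesis using bound unfolding X_def k_def by simp
  qed
qed

end
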